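(* In the model and protocol $\mathrm{OciorABA}^*$ described in the context, with $n\ge 3t+1$, if all honest nodes input the same message $w$, then every honest node eventually outputs $w$.
   Context: Model: there are $n$ nodes $\mathrm{Node}_1,\dots,\mathrm{Node}_n$ in an asynchronous network (every message sent between honest nodes is eventually delivered, with arbitrary adversarial delay). An adaptive adversary may corrupt (make dishonest/Byzantine) at most $t$ nodes in total; $\mathcal F\subseteq[1:n]$ denotes the set of dishonest nodes; $n\ge 3t+1$. Primitives used as black boxes: (RBC) For each $j\in[1:n]$ there is a reliable broadcast instance $\mathrm{RBC}_j$ with leader $\mathrm{Node}_j$, satisfying: Consistency (if two honest nodes output $w',w''$ then $w'=w''$); Validity (if the leader is honest and inputs $w$, every honest node eventually outputs $w$); Totality (if one honest node outputs a value, every honest node eventually outputs a value). (ABBA) For each $j\in[1:n]$ there is a binary Byzantine agreement instance $\mathrm{ABBA}_j$ (inputs and outputs in $\{0,1\}$), satisfying: Termination (if all honest nodes provide inputs, every honest node eventually outputs a value and terminates); Consistency (if an honest node outputs $b$, every honest node eventually outputs $b$); Validity (if all honest nodes input the same $b$, every honest node eventually outputs $b$). (Erasure code) An $(n,t+1)$ erasure code over an alphabet $\Sigma$: an encoder $\mathrm{Enc}$ mapping a message $w$ to $(\mathrm{Enc}_1(w),\dots,\mathrm{Enc}_n(w))\in\Sigma^n$ and a decoder $\mathrm{Dec}$ such that for every set $K\subseteq[1:n]$ with $|K|=t+1$, $\mathrm{Dec}(\{\mathrm{Enc}_j(w)\}_{j\in K})=w$. Protocol $\mathrm{OciorABA}^*$,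 code for an honest $\mathrm{Node}_i$ with input message $w_i$: (1) Compute $(y^{(i)}_1,\dots,y^{(i)}_n)=\mathrm{Enc}(w_i)$ and input $y^{(i)}_i$ into $\mathrm{RBC}_i$ (as leader). (2) Upon delivery of a value $y^{(j)}_j$ from $\mathrm{RBC}_j$ (after step (1) has been executed), if $\mathrm{Node}_i$ has not yet given an input to $\mathrm{ABBA}_j$: set $a_i[j]=1$ if $y^{(j)}_j=y^{(i)}_j$ and $a_i[j]=0$ otherwise, and input $a_i[j]$ into $\mathrm{ABBA}_j$. (3) Upon obtaining outputs from $n-t$ of the instances $\mathrm{ABBA}_1,\dots,\mathrm{ABBA}_n$, input $0$ into every $\mathrm{ABBA}_j$ to which $\mathrm{Node}_i$ has not yet given an input. (4) Upon obtaining outputs from all $n$ ABBA instances: let $S=\{j:\mathrm{ABBA}_j\text{ output }1\}$. If $|S|<t+1$, output a default value $\bot$ and terminate. Otherwise let $K$ be the set of the $t+1$ smallest elements of $S$, wait for delivery of $y^{(j)}_j$ from $\mathrm{RBC}_j$ for all $j\in K$, output $\mathrm{Dec}(\{y^{(j)}_j\}_{j\in K})$ and terminate. *)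

theory Defs
  imports Main
begin

text \<open>The adversary corrupts a set F of at most t nodes
(the set of nodes that are ever corrupted); the honest nodes are {1..n} - F.
Time is discrete (nat); an asynchronous execution is described by the
time-stamped events observed at honest nodes:
  rbc_out i j = Some (tau, v) : honest node i delivers value v from RBC_j at time tau
  abba_in i j = Some (tau, b) : honest node i inputs b into ABBA_j at time tau
  abba_out i j = Some (tau, b) : honest node i obtains output b from ABBA_j at time tau
(None means: never happens).\<close>

type_synonym 's rbc_trace = "nat \<Rightarrow> nat \<Rightarrow> (nat \<times> 's) option"
type_synonym abba_trace = "nat \<Rightarrow> nat \<Rightarrow> (nat \<times> bool) option"

definition honest :: "nat \<Rightarrow> nat set \<Rightarrow> nat set" where
  "honest n F = {1..n} - F"

text \<open>(n, t+1) erasure code: Dec K y only reads the symbols y j, j in K.\<close>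
definition erasure_code ::
  "nat \<Rightarrow> nat \<Rightarrow> ('m \<Rightarrow> nat \<Rightarrow> 's) \<Rightarrow> (nat set \<Rightarrow> (nat \<Rightarrow> 's) \<Rightarrow> 'm) \<Rightarrow> bool" where
  "erasure_code n t Enc Dec \<longleftrightarrow>
     (\<forall>K w y. K \<subseteq> {1..n} \<and> card K = t + 1 \<and> (\<forall>j\<in>K. y j = Enc w j) \<longrightarrow> Dec K y = w)"

text \<open>Reliable broadcast instances RBC_j; by step (1) of the protocol an honest leader j
inputs Enc_j(w_j).\<close>
definition rbc_props ::
  "nat \<Rightarrow> nat set \<Rightarrow> (nat \<Rightarrow> 's) \<Rightarrow> 's rbc_trace \<Rightarrow> bool" where
  "rbc_props n F leader_input rbc_out \<longleftrightarrow>
     (\<forall>j\<in>{1..n}.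
        (\<forall>i\<in>honest n F. \<forall>i'\<in>honest n F. \<forall>\<tau> \<tau>' v v'.
            rbc_out i j = Some (\<tau>, v) \<and> rbc_out i' j = Some (\<tau>', v') \<longrightarrow> v = v')
      \<and> (j \<in> honest n F \<longrightarrow> (\<forall>i\<in>honest n F. \<exists>\<tau>. rbc_out i j = Some (\<tau>, leader_input j)))
      \<and> ((\<exists>i\<in>honest n F. rbc_out i j \<noteq> None) \<longrightarrow> (\<forall>i\<in>honest n F. rbc_out i j \<noteq> None)))"

text \<open>Besides Termination, Consistency and Validity,
we impose the causal (safety) form of validity: an honest node can obtain output b
from ABBA_j at time tau only if some honest node input b into ABBA_j strictly before tau.
This is what validity means for a black box whose behaviour cannot depend on future
inputs.\<close>
definition abba_props :: "nat \<Rightarrow> nat set \<Rightarrow> abba_trace \<Rightarrow> abba_trace \<Rightarrow> bool" where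
  "abba_props n F abba_in abba_out \<longleftrightarrow>
     (\<forall>j\<in>{1..n}.
        ((\<forall>i\<in>honest n F. abba_in i j \<noteq> None) \<longrightarrow> (\<forall>i\<in>honest n F. abba_out i j \<noteq> None))
      \<and> (\<forall>i\<in>honest n F. \<forall>i'\<in>honest n F. \<forall>\<tau> b.
            abba_out i j = Some (\<tau>, b) \<longrightarrow> (\<exists>\<tau>'. abba_out i' j = Some (\<tau>', b)))
      \<and> (\<forall>b. (\<forall>i\<in>honest n F. \<exists>\<tau>. abba_in i j = Some (\<tau>, b))
              \<longrightarrow> (\<forall>i\<in>honest n F. \<exists>\<tau>. abba_out i j = Some (\<tau>, b)))
      \<and> (\<forall>i\<in>honest n F. \<forall>\<tau> b. abba_out i j = Some (\<tau>, b)
              \<longrightarrow> (\<exists>i'\<in>honest n F. \<exists>\<tau>'<\<tau>. abba_in i' j = Some (\<tau>', b))))"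

definition outputs_by :: "nat \<Rightarrow> abba_trace \<Rightarrow> nat \<Rightarrow> nat \<Rightarrow> nat" where
  "outputs_by n abba_out i \<tau> = card {j\<in>{1..n}. \<exists>\<tau>'\<le>\<tau>. \<exists>b. abba_out i j = Some (\<tau>', b)}"

definition step3_time :: "nat \<Rightarrow> nat \<Rightarrow> abba_trace \<Rightarrow> nat \<Rightarrow> nat option" where
  "step3_time n t abba_out i =
     (if \<exists>\<tau>. outputs_by n abba_out i \<tau> \<ge> n - t
      then Some (LEAST \<tau>. outputs_by n abba_out i \<tau> \<ge> n - t) else None)"

text \<open>Steps (2) and (3): the input of honest node i into ABBA_j is given by whichever
happens first: delivery from RBC_j (input 1 iff the delivered value equals Enc_j(w_i)),
or having n - t ABBA outputs (input 0).\<close>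
definition protocol_abba_input ::
  "nat \<Rightarrow> nat \<Rightarrow> ('m \<Rightarrow> nat \<Rightarrow> 's) \<Rightarrow> (nat \<Rightarrow> 'm) \<Rightarrow> 's rbc_trace \<Rightarrow> abba_trace
     \<Rightarrow> nat \<Rightarrow> nat \<Rightarrow> (nat \<times> bool) option" where
  "protocol_abba_input n t Enc w rbc_out abba_out i j =
     (case (rbc_out i j, step3_time n t abba_out i) of
        (None, None) \<Rightarrow> None
      | (Some (d, v), None) \<Rightarrow> Some (d, v = Enc (w i) j)
      | (None, Some \<tau>) \<Rightarrow> Some (\<tau>, False)
      | (Some (d, v), Some \<tau>) \<Rightarrow>
          (if d \<le> \<tau> then Some (d, v = Enc (w i) j) else Some (\<tau>, False)))"

definition smallest :: "nat \<Rightarrow> nat set \<Rightarrow> nat set" where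
  "smallest k S = {j\<in>S. card {l\<in>S. l < j} < k}"

text \<open>Step (4): output of honest node i.  None = never outputs,
Some None = outputs the default value \<bottom>, Some (Some m) = outputs m.\<close>
definition node_output ::
  "nat \<Rightarrow> nat \<Rightarrow> (nat set \<Rightarrow> (nat \<Rightarrow> 's) \<Rightarrow> 'm) \<Rightarrow> 's rbc_trace \<Rightarrow> abba_trace
     \<Rightarrow> nat \<Rightarrow> 'm option option" where
  "node_output n t Dec rbc_out abba_out i =
     (if \<forall>j\<in>{1..n}. abba_out i j \<noteq> None then
        (let S = {j\<in>{1..n}. \<exists>\<tau>. abba_out i j = Some (\<tau>, True)} in
         if card S < t + 1 then Some None
         else (let K = smallest (t + 1) S in
               if \<forall>j\<in>K. rbc_out i j \<noteq> None
               then Some (Some (Dec K (\<lambda>j. snd (the (rbc_out i j)))))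
               else None))
      else None)"

text \<open>An execution of OciorABA* : the primitives satisfy their properties and every
honest node follows steps (1)-(3) (step (4) is node_output).\<close>
definition ocior_execution ::
  "nat \<Rightarrow> nat \<Rightarrow> nat set \<Rightarrow> ('m \<Rightarrow> nat \<Rightarrow> 's) \<Rightarrow> (nat \<Rightarrow> 'm)
     \<Rightarrow> 's rbc_trace \<Rightarrow> abba_trace \<Rightarrow> abba_trace \<Rightarrow> bool" where
  "ocior_execution n t F Enc w rbc_out abba_in abba_out \<longleftrightarrow>
     rbc_props n F (\<lambda>j. Enc (w j) j) rbc_out
   \<and> abba_props n F abba_in abba_out
   \<and> (\<forall>i\<in>honest n F. \<forall>j\<in>{1..n}.
        abba_in i j = protocol_abba_input n t Enc w rbc_out abba_out i j)"

end

theory Submission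
  imports Defs
begin

lemma smallest_card:
  fixes S :: "nat set"
  assumes fin: "finite S" and k: "k \<le> card S"
  shows "card (smallest k S) = k" "smallest k S \<subseteq> S"
proof -
  define f where "f j = card {l\<in>S. l < j}" for j
  have mono: "f j < f j'" if "j \<in> S" "j' \<in> S" "j < j'" for j j'
  proof -
    have "{l\<in>S. l < j} \<subset> {l\<in>S. l < j'}" using that by auto
    moreover have "finite {l\<in>S. l < j'}" using fin by auto
    ultimately show ?thesis unfolding f_def by (simp add: psubset_card_mono)
  qed
  have inj: "inj_on f S"
    by (metis linorder_inj_onI' mono order_less_irrefl)
  have rng: "f ` S \<subseteq> {0..<card S}"
  proof
    fix x assume "x \<in> f ` S"
    then obtain j where j: "j \<in> S" "x = f j" by auto
    have "{l\<in>S. l < j} \<subset> S" using j by auto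
    hence "f j < card S" unfolding f_def using fin by (simp add: psubset_card_mono)
    thus "x \<in> {0..<card S}" using j by auto
  qed
  have img: "f ` S = {0..<card S}"
    using rng inj card_image[OF inj] by (simp add: card_subset_eq)
  have sm: "smallest k S = {j\<in>S. f j < k}" unfolding smallest_def f_def by simp
  have "f ` {j\<in>S. f j < k} = {0..<k}"
  proof
    show "f ` {j\<in>S. f j < k} \<subseteq> {0..<k}" by auto
    show "{0..<k} \<subseteq> f ` {j\<in>S. f j < k}"
    proof
      fix x assume x: "x \<in> {0..<k}"
      hence "x \<in> f ` S" using img k by auto
      then obtain j where "j \<in> S" "x = f j" by auto
      thus "x \<in> f ` {j\<in>S. f j < k}" using x by auto
    qed
  qed
  moreover have "inj_on f {j\<in>S. f j < k}" using inj by (rule inj_on_subset) auto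
  ultimately show "card (smallest k S) = k" unfolding sm
    by (metis card_atLeastLessThan card_image diff_zero)
  show "smallest k S \<subseteq> S" unfolding sm by auto
qed

theorem theorem2:
  fixes n t :: nat and F :: "nat set"
    and Enc :: "'m \<Rightarrow> nat \<Rightarrow> 's" and Dec :: "nat set \<Rightarrow> (nat \<Rightarrow> 's) \<Rightarrow> 'm"
    and w :: "nat \<Rightarrow> 'm" and w0 :: 'm
    and rbc_out :: "'s rbc_trace" and abba_in abba_out :: abba_trace
  assumes "n \<ge> 3 * t + 1"
    and "F \<subseteq> {1..n}" and "card F \<le> t"
    and "erasure_code n t Enc Dec"
    and "ocior_execution n t F Enc w rbc_out abba_in abba_out"
    and "\<forall>i\<in>honest n F. w i = w0"
  shows "\<forall>i\<in>honest n F. node_output n t Dec rbc_out abba_out i = Some (Some w0)"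
proof -
  note a = assms
  define H where "H = honest n F"
  have H_def': "H = {1..n} - F" unfolding H_def honest_def by simp
  have finH: "finite H" unfolding H_def' by auto
  have cardH: "card H \<ge> n - t"
  proof -
    have "card H = card {1..n} - card F" unfolding H_def'
      using a(2) by (simp add: card_Diff_subset finite_subset)
    thus ?thesis using a(3) by simp
  qed
  have HsubN: "H \<subseteq> {1..n}" unfolding H_def' by auto
  have rbc: "rbc_props n F (\<lambda>j. Enc (w j) j) rbc_out"
    and abba: "abba_props n F abba_in abba_out"
    and inp: "\<And>i j. i \<in> H \<Longrightarrow> j \<in> {1..n} \<Longrightarrow>
        abba_in i j = protocol_abba_input n t Enc w rbc_out abba_out i j"
    using a(5) unfolding ocior_execution_def H_def by auto
  have wH: "\<And>i. i \<in> H \<Longrightarrow> w i = w0" using a(6) H_def by auto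
  have R1: "\<And>i j. i \<in> H \<Longrightarrow> j \<in> H \<Longrightarrow> \<exists>\<tau>. rbc_out i j = Some (\<tau>, Enc w0 j)"
  proof -
    fix i j assume ij: "i \<in> H" "j \<in> H"
    hence "\<exists>\<tau>. rbc_out i j = Some (\<tau>, Enc (w j) j)"
      using rbc HsubN unfolding rbc_props_def H_def by blast
    thus "\<exists>\<tau>. rbc_out i j = Some (\<tau>, Enc w0 j)" using wH ij by simp
  qed
  have Rcons: "\<And>i i' j \<tau> \<tau>' v v'. j \<in> {1..n} \<Longrightarrow> i \<in> H \<Longrightarrow> i' \<in> H \<Longrightarrow>
      rbc_out i j = Some (\<tau>, v) \<Longrightarrow> rbc_out i' j = Some (\<tau>', v') \<Longrightarrow> v = v'"
    using rbc unfolding rbc_props_def H_def by blast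
  have Rtot: "\<And>i i' j. j \<in> {1..n} \<Longrightarrow> i \<in> H \<Longrightarrow> i' \<in> H \<Longrightarrow>
      rbc_out i j \<noteq> None \<Longrightarrow> rbc_out i' j \<noteq> None"
    using rbc unfolding rbc_props_def H_def by blast
  have Aterm: "\<And>j. j \<in> {1..n} \<Longrightarrow> (\<forall>i\<in>H. abba_in i j \<noteq> None) \<Longrightarrow> (\<forall>i\<in>H. abba_out i j \<noteq> None)"
    using abba unfolding abba_props_def H_def by blast
  have Acons: "\<And>i i' j \<tau> b. j \<in> {1..n} \<Longrightarrow> i \<in> H \<Longrightarrow> i' \<in> H \<Longrightarrow>
      abba_out i j = Some (\<tau>, b) \<Longrightarrow> \<exists>\<tau>'. abba_out i' j = Some (\<tau>', b)"
    using abba unfolding abba_props_def H_def by blast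
  have Acaus: "\<And>i j \<tau> b. j \<in> {1..n} \<Longrightarrow> i \<in> H \<Longrightarrow>
      abba_out i j = Some (\<tau>, b) \<Longrightarrow> \<exists>i'\<in>H. \<exists>\<tau>'<\<tau>. abba_in i' j = Some (\<tau>', b)"
    using abba unfolding abba_props_def H_def by blast
  have A: "\<And>i j. i \<in> H \<Longrightarrow> j \<in> H \<Longrightarrow> abba_out i j \<noteq> None"
  proof -
    fix i j assume ij: "i \<in> H" "j \<in> H"
    have "\<forall>i\<in>H. abba_in i j \<noteq> None"
    proof
      fix i assume i: "i \<in> H"
      obtain \<tau> where "rbc_out i j = Some (\<tau>, Enc w0 j)" using R1 i ij by blast
      moreover have jn: "j \<in> {1..n}" using ij HsubN by auto
      ultimately show "abba_in i j \<noteq> None" using inp[OF i jn]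
        unfolding protocol_abba_input_def
        by (auto split: option.splits)
    qed
    thus "abba_out i j \<noteq> None" using Aterm ij HsubN by blast
  qed
  have B: "\<And>i. i \<in> H \<Longrightarrow> \<exists>\<tau>. outputs_by n abba_out i \<tau> \<ge> n - t"
  proof -
    fix i assume i: "i \<in> H"
    define T where "T = (\<Sum>j\<in>H. fst (the (abba_out i j)))"
    have "H \<subseteq> {j\<in>{1..n}. \<exists>\<tau>'\<le>T. \<exists>b. abba_out i j = Some (\<tau>', b)}"
    proof
      fix j assume j: "j \<in> H"
      obtain \<tau> b where ab: "abba_out i j = Some (\<tau>, b)" using A[OF i j] by fastforce
      have "fst (the (abba_out i j)) \<le> T" unfolding T_def
        using member_le_sum[of j H "\<lambda>j. fst (the (abba_out i j))"] j finH by simp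
      thus "j \<in> {j\<in>{1..n}. \<exists>\<tau>'\<le>T. \<exists>b. abba_out i j = Some (\<tau>', b)}"
        using ab j HsubN by auto
    qed
    hence "card H \<le> outputs_by n abba_out i T" unfolding outputs_by_def
      by (intro card_mono) auto
    thus "\<exists>\<tau>. outputs_by n abba_out i \<tau> \<ge> n - t" using cardH by (intro exI[of _ T]) simp
  qed
  define s where "s i = (LEAST \<tau>. outputs_by n abba_out i \<tau> \<ge> n - t)" for i
  have s3: "\<And>i. i \<in> H \<Longrightarrow> step3_time n t abba_out i = Some (s i)"
    using B unfolding step3_time_def s_def by auto
  have sge: "\<And>i. i \<in> H \<Longrightarrow> outputs_by n abba_out i (s i) \<ge> n - t"
    unfolding s_def using B by (metis (mono_tags, lifting) LeastI)
  have C: "\<And>i j. i \<in> H \<Longrightarrow> j \<in> {1..n} \<Longrightarrow> abba_out i j \<noteq> None"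
  proof -
    fix i j assume ij: "i \<in> H" "j \<in> {1..n}"
    have "\<forall>i\<in>H. abba_in i j \<noteq> None"
    proof
      fix i assume i: "i \<in> H"
      show "abba_in i j \<noteq> None" using inp[OF i ij(2)] s3[OF i]
        unfolding protocol_abba_input_def
        by (auto split: option.splits)
    qed
    thus "abba_out i j \<noteq> None" using Aterm ij by blast
  qed
  have E: "\<And>i j \<tau>. i \<in> H \<Longrightarrow> j \<in> {1..n} \<Longrightarrow> abba_out i j = Some (\<tau>, True) \<Longrightarrow>
      \<exists>d. rbc_out i j = Some (d, Enc w0 j)"
  proof -
    fix i j \<tau> assume ij: "i \<in> H" "j \<in> {1..n}" and ab: "abba_out i j = Some (\<tau>, True)"
    obtain i' \<tau>' where i': "i' \<in> H" "abba_in i' j = Some (\<tau>', True)"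
      using Acaus[OF ij(2) ij(1) ab] by blast
    have "\<exists>d. rbc_out i' j = Some (d, Enc w0 j)"
      using i'(2) inp[OF i'(1) ij(2)] s3[OF i'(1)] wH[OF i'(1)]
      unfolding protocol_abba_input_def
      by (auto split: option.splits if_splits)
    then obtain d where d: "rbc_out i' j = Some (d, Enc w0 j)" by blast
    obtain d2 v2 where d2: "rbc_out i j = Some (d2, v2)"
      using Rtot[OF ij(2) i'(1) ij(1)] d by fastforce
    have "v2 = Enc w0 j" using Rcons[OF ij(2) ij(1) i'(1) d2 d] .
    thus "\<exists>d. rbc_out i j = Some (d, Enc w0 j)" using d2 by blast
  qed
  have Hne: "H \<noteq> {}" using cardH a(1) by auto
  define ts where "ts = Min (s ` H)"
  obtain i0 where i0: "i0 \<in> H" "s i0 = ts"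
  proof -
    have "ts \<in> s ` H" unfolding ts_def using finH Hne by (intro Min_in) auto
    thus ?thesis using that by auto
  qed
  have tsle: "\<And>i. i \<in> H \<Longrightarrow> ts \<le> s i" unfolding ts_def using finH by simp
  define J where "J = {j\<in>{1..n}. \<exists>\<tau>'\<le>ts. \<exists>b. abba_out i0 j = Some (\<tau>', b)}"
  have cardJ: "card J \<ge> n - t" using sge[OF i0(1)] i0(2)
    unfolding J_def outputs_by_def by simp
  have finJ: "finite J" unfolding J_def by auto
  have "card J \<le> card (J \<inter> H) + card (J \<inter> F)"
  proof -
    have "J = (J \<inter> H) \<union> (J \<inter> F)" unfolding J_def H_def' by auto
    hence "card J = card ((J \<inter> H) \<union> (J \<inter> F))" by simp
    also have "\<dots> \<le> card (J \<inter> H) + card (J \<inter> F)" by (rule card_Un_le)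
    finally show ?thesis .
  qed
  moreover have "card (J \<inter> F) \<le> t"
    using a(3) a(2) card_mono[of F "J \<inter> F"] finite_subset[OF a(2)] by fastforce
  ultimately have cardJH: "card (J \<inter> H) \<ge> t + 1" using cardJ a(1) by linarith
  have JH: "\<And>j. j \<in> J \<inter> H \<Longrightarrow> \<exists>\<tau>. abba_out i0 j = Some (\<tau>, True)"
  proof -
    fix j assume j: "j \<in> J \<inter> H"
    then obtain \<tau>' b where tb: "\<tau>' \<le> ts" "abba_out i0 j = Some (\<tau>', b)" unfolding J_def by auto
    have jn: "j \<in> {1..n}" using j HsubN by auto
    obtain i' \<tau>'' where i': "i' \<in> H" "\<tau>'' < \<tau>'" "abba_in i' j = Some (\<tau>'', b)"
      using Acaus[OF jn i0(1) tb(2)] by blast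
    obtain d where d: "rbc_out i' j = Some (d, Enc w0 j)" using R1 i'(1) j by blast
    have "ts \<le> s i'" using tsle i'(1) .
    have eq: "abba_in i' j = (if d \<le> s i' then Some (d, True) else Some (s i', False))"
    proof -
      have "abba_in i' j = protocol_abba_input n t Enc w rbc_out abba_out i' j" using inp[OF i'(1) jn] .
      also have "\<dots> = (if d \<le> s i' then Some (d, Enc w0 j = Enc (w i') j) else Some (s i', False))"
        unfolding protocol_abba_input_def d s3[OF i'(1)] by (simp only: prod.case option.case)
      also have "\<dots> = (if d \<le> s i' then Some (d, True) else Some (s i', False))"
        using wH[OF i'(1)] by simp
      finally show ?thesis .
    qed
    have "b"
    proof (cases "d \<le> s i'")
      case True thus ?thesis using eq i'(3) by simp
    next
      case False
      hence "\<tau>'' = s i'" using eq i'(3) by simp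
      thus ?thesis using i'(2) tb(1) \<open>ts \<le> s i'\<close> by simp
    qed
    thus "\<exists>\<tau>. abba_out i0 j = Some (\<tau>, True)" using tb by auto
  qed
  show ?thesis
  proof
    fix i assume iH0: "i \<in> honest n F"
    hence i: "i \<in> H" unfolding H_def .
    define S where "S = {j\<in>{1..n}. \<exists>\<tau>. abba_out i j = Some (\<tau>, True)}"
    have "J \<inter> H \<subseteq> S"
    proof
      fix j assume j: "j \<in> J \<inter> H"
      have jn: "j \<in> {1..n}" using j HsubN by auto
      obtain \<tau> where "abba_out i0 j = Some (\<tau>, True)" using JH j by blast
      thus "j \<in> S" using Acons[OF jn i0(1) i] jn unfolding S_def by blast
    qed
    hence cardS: "card S \<ge> t + 1" using cardJH card_mono[of S "J \<inter> H"]
      unfolding S_def by fastforce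
    define K where "K = smallest (t + 1) S"
    have finS: "finite S" unfolding S_def by auto
    have cK: "card K = t + 1" and KS: "K \<subseteq> S"
      using smallest_card[OF finS cardS] unfolding K_def by auto
    have Kr: "\<And>j. j \<in> K \<Longrightarrow> \<exists>d. rbc_out i j = Some (d, Enc w0 j)"
    proof -
      fix j assume "j \<in> K"
      hence "j \<in> S" using KS by auto
      thus "\<exists>d. rbc_out i j = Some (d, Enc w0 j)" using E i unfolding S_def by blast
    qed
    have dec: "Dec K (\<lambda>j. snd (the (rbc_out i j))) = w0"
      using a(4) unfolding erasure_code_def
    proof -
      assume ec: "\<forall>K w y. K \<subseteq> {1..n} \<and> card K = t + 1 \<and> (\<forall>j\<in>K. y j = Enc w j) \<longrightarrow> Dec K y = w"
      have "K \<subseteq> {1..n}" using KS unfolding S_def by auto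
      moreover have "\<forall>j\<in>K. snd (the (rbc_out i j)) = Enc w0 j" using Kr by fastforce
      ultimately show ?thesis using ec[rule_format, of K "\<lambda>j. snd (the (rbc_out i j))" w0] cK by simp
    qed
    have allout: "\<forall>j\<in>{1..n}. abba_out i j \<noteq> None" using C i by blast
    have Kall: "\<forall>j\<in>K. rbc_out i j \<noteq> None" using Kr by fastforce
    show "node_output n t Dec rbc_out abba_out i = Some (Some w0)"
      unfolding node_output_def Let_def
      using allout cardS Kall dec
      unfolding S_def K_def by simp
  qed
qed

end
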